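(* There exists an integer $\mathsf{N}\ge 1$ such that $SAW_2(\mathsf{N})\neq SAW_3(\mathsf{N})$; that is, there is a path without crossing $c\in(\mathbb{Z}/4\mathbb{Z})^{\mathsf{N}}$ that cannot be reached from $(0,0,\dots,0)$ by a finite sequence of pivot moves all of whose intermediate conformations are paths without crossing.
   Context: A conformation of $\mathsf{N}+1$ residues is a vector $C=(C_1,\dots,C_{\mathsf{N}})\in(\mathbb{Z}/4\mathbb{Z})^{\mathsf{N}}$ (absolute encoding: $0$ = east, $1$ = south, $2$ = west, $3$ = north). Its lattice representation is $p(C)=(X_0,\dots,X_{\mathsf{N}})$ with $X_0=(0,0)$ and $X_{i}=X_{i-1}+(1,0),(0,-1),(-1,0),(0,1)$ according as $C_i=0,1,2,3$. $C$ is a path without crossing if the points $X_0,\dots,X_{\mathsf{N}}$ are pairwise distinct. $SAW_1(\mathsf{N})$ is the set of paths without crossing in $(\mathbb{Z}/4\mathbb{Z})^{\mathsf{N}}$. Let $f(x)=x+1 \pmod 4$. For $k\in\{-\mathsf{N},\dots,\mathsf{N}\}$ the pivot move $f_k$ is the identity if $k=0$, and otherwise $f_k(C_1,\dots,C_{\mathsf{N}})=(C_1,\dots,C_{|k|-1},f^{\operatorname{sign}(k)}(C_{|k|}),\dots,f^{\operatorname{sign}(k)}(C_{\mathsf{N}}))$. $SAW_2(\mathsf{N})$ is the set of $c\in SAW_1(\mathsf{N})$ for which there is a finite sequence $k_1,\dots,k_n\in\{-\mathsf{N},\dots,\mathsf{N}\}$ with $c=f_{k_n}\circ\cdots\circ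 f_{k_1}(0,\dots,0)$. $SAW_3(\mathsf{N})$ is the set of $c\in SAW_1(\mathsf{N})$ for which there is such a sequence with, in addition, every intermediate conformation $f_{k_j}\circ\cdots\circ f_{k_1}(0,\dots,0)$, $1\le j\le n$, lying in $SAW_1(\mathsf{N})$. *)

theory Defs
  imports Main
begin

text \<open>A conformation of N+1 residues is a list of length N with entries in
  {0,1,2,3}, representing Z/4Z (absolute encoding: 0 east, 1 south, 2 west, 3 north).\<close>

definition conformations :: "nat \<Rightarrow> nat list set" where
  "conformations N = {C. length C = N \<and> set C \<subseteq> {0..<4}}"

fun dstep :: "nat \<Rightarrow> int \<times> int" where
  "dstep d = (if d = 0 then (1, 0) else if d = 1 then (0, -1)
              else if d = 2 then (-1, 0) else (0, 1))"

fun lattice_from :: "int \<times> int \<Rightarrow> nat list \<Rightarrow> (int \<times> int) list" where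
  "lattice_from p [] = [p]"
| "lattice_from p (c # cs) =
     p # lattice_from (fst p + fst (dstep c), snd p + snd (dstep c)) cs"

definition lattice_rep :: "nat list \<Rightarrow> (int \<times> int) list" where
  "lattice_rep C = lattice_from (0, 0) C"

definition SAW1 :: "nat \<Rightarrow> nat list set" where
  "SAW1 N = {C \<in> conformations N. distinct (lattice_rep C)}"

definition pivot :: "int \<Rightarrow> nat list \<Rightarrow> nat list" where
  "pivot k C = (if k = 0 then C else
     map (\<lambda>(i, x). if nat \<bar>k\<bar> \<le> i then (if k > 0 then (x + 1) mod 4 else (x + 3) mod 4) else x)
         (zip [1..<length C + 1] C))"

definition apply_pivots :: "int list \<Rightarrow> nat list \<Rightarrow> nat list" where
  "apply_pivots ks C = foldl (\<lambda>D k. pivot k D) C ks"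

definition SAW2 :: "nat \<Rightarrow> nat list set" where
  "SAW2 N = {c \<in> SAW1 N. \<exists>ks. (\<forall>k \<in> set ks. \<bar>k\<bar> \<le> int N)
                  \<and> c = apply_pivots ks (replicate N 0)}"

definition SAW3 :: "nat \<Rightarrow> nat list set" where
  "SAW3 N = {c \<in> SAW1 N. \<exists>ks. (\<forall>k \<in> set ks. \<bar>k\<bar> \<le> int N)
                  \<and> c = apply_pivots ks (replicate N 0)
                  \<and> (\<forall>j. 1 \<le> j \<and> j \<le> length ks \<longrightarrow>
                         apply_pivots (take j ks) (replicate N 0) \<in> SAW1 N)}"

end

theory Submission
  imports Defs
begin


definition g1 :: "nat \<Rightarrow> nat" where "g1 x = (x + 1) mod 4"
definition g3 :: "nat \<Rightarrow> nat" where "g3 x = (x + 3) mod 4"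

lemma pivot_length[simp]: "length (pivot k C) = length C"
  by (cases "length C") (auto simp: pivot_def)

lemma pivot_nth:
  assumes "i < length C"
  shows "pivot k C ! i = (if k \<noteq> 0 \<and> nat \<bar>k\<bar> \<le> Suc i then (if k > 0 then g1 (C!i) else g3 (C!i)) else C!i)"
  using assms by (simp add: pivot_def nth_zip g1_def g3_def del: upt_Suc)

lemma pivot_pos:
  assumes "1 \<le> k"
  shows "pivot (int k) C = take (k-1) C @ map g1 (drop (k-1) C)"
proof (rule nth_equalityI)
  show "length (pivot (int k) C) = length (take (k - 1) C @ map g1 (drop (k - 1) C))"
    using assms by (cases "length C") (auto simp: pivot_def min_def)
next
  fix i assume "i < length (pivot (int k) C)"
  then have i: "i < length C" using assms by (simp add: pivot_def)
  show "pivot (int k) C ! i = (take (k - 1) C @ map g1 (drop (k - 1) C)) ! i"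
    using assms i by (auto simp: pivot_nth nth_append min_def)
qed

lemma pivot_neg:
  assumes "1 \<le> k"
  shows "pivot (- int k) C = take (k-1) C @ map g3 (drop (k-1) C)"
proof (rule nth_equalityI)
  show "length (pivot (- int k) C) = length (take (k - 1) C @ map g3 (drop (k - 1) C))"
    using assms by (cases "length C") (auto simp: pivot_def min_def)
next
  fix i assume "i < length (pivot (- int k) C)"
  then have i: "i < length C" using assms by (simp add: pivot_def)
  show "pivot (- int k) C ! i = (take (k - 1) C @ map g3 (drop (k - 1) C)) ! i"
    using assms i by (auto simp: pivot_nth nth_append min_def)
qed

lemma four_cases: "(d::nat) < 4 \<Longrightarrow> d = 0 \<or> d = 1 \<or> d = 2 \<or> d = 3" by auto

lemma g_inv: "x < 4 \<Longrightarrow> g3 (g1 x) = x" "x < 4 \<Longrightarrow> g1 (g3 x) = x"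
  by (drule four_cases, elim disjE, simp_all add: g1_def g3_def)+

lemma pivot_inv:
  assumes "set D \<subseteq> {0..<4}"
  shows "pivot (-k) (pivot k D) = D"
proof (rule nth_equalityI)
  fix i assume "i < length (pivot (-k) (pivot k D))"
  then have i: "i < length D" by simp
  have "D!i < 4" using assms i nth_mem by fastforce
  then show "pivot (-k) (pivot k D) ! i = D ! i"
    using i by (auto simp: pivot_nth g_inv)
qed simp

definition cw :: "int \<times> int \<Rightarrow> int \<times> int" where "cw v = (snd v, - fst v)"
definition ccw :: "int \<times> int \<Rightarrow> int \<times> int" where "ccw v = (- snd v, fst v)"
definition shift :: "int \<times> int \<Rightarrow> int \<times> int \<Rightarrow> int \<times> int" where
  "shift q v = (fst v + fst q, snd v + snd q)"
definition rotab :: "(int \<times> int \<Rightarrow> int \<times> int) \<Rightarrow> int \<times> int \<Rightarrow> int \<times> int \<Rightarrow> int \<times> int" where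
  "rotab R e v = shift e (R (fst v - fst e, snd v - snd e))"

lemma dstep_g1: "d < 4 \<Longrightarrow> dstep (g1 d) = cw (dstep d)"
  apply (drule four_cases) apply (elim disjE) by (simp_all add: g1_def cw_def)

lemma dstep_g3: "d < 4 \<Longrightarrow> dstep (g3 d) = ccw (dstep d)"
  apply (drule four_cases) apply (elim disjE) by (simp_all add: g3_def ccw_def)

declare dstep.simps[simp del]

lemma lf_len[simp]: "length (lattice_from p C) = Suc (length C)"
  by (induction C arbitrary: p) auto

lemma lf_ne[simp]: "lattice_from p C \<noteq> []"
  by (cases C) auto

lemma lf_nth0[simp]: "lattice_from p C ! 0 = p"
  by (cases C) auto

lemma lf_shift: "lattice_from (shift q p) C = map (shift q) (lattice_from p C)"
proof (induction C arbitrary: p)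
  case Nil then show ?case by simp
next
  case (Cons c cs)
  have "(fst (shift q p) + fst (dstep c), snd (shift q p) + snd (dstep c))
        = shift q (fst p + fst (dstep c), snd p + snd (dstep c))"
    by (simp add: shift_def)
  then show ?case using Cons by simp
qed

lemma lf_rot1: "set C \<subseteq> {0..<4} \<Longrightarrow> lattice_from (cw p) (map g1 C) = map cw (lattice_from p C)"
proof (induction C arbitrary: p)
  case Nil then show ?case by simp
next
  case (Cons c cs)
  have c: "c < 4" using Cons.prems by auto
  have "(fst (cw p) + fst (dstep (g1 c)), snd (cw p) + snd (dstep (g1 c)))
        = cw (fst p + fst (dstep c), snd p + snd (dstep c))"
    using c by (simp add: dstep_g1) (simp add: cw_def)
  then show ?case using Cons by simp
qed

lemma lf_rot3: "set C \<subseteq> {0..<4} \<Longrightarrow> lattice_from (ccw p) (map g3 C) = map ccw (lattice_from p C)"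
proof (induction C arbitrary: p)
  case Nil then show ?case by simp
next
  case (Cons c cs)
  have c: "c < 4" using Cons.prems by auto
  have "(fst (ccw p) + fst (dstep (g3 c)), snd (ccw p) + snd (dstep (g3 c)))
        = ccw (fst p + fst (dstep c), snd p + snd (dstep c))"
    using c by (simp add: dstep_g3) (simp add: ccw_def)
  then show ?case using Cons by simp
qed

lemma lf_append: "lattice_from p (xs @ ys) =
   butlast (lattice_from p xs) @ lattice_from (last (lattice_from p xs)) ys"
  by (induction xs arbitrary: p) auto

lemma lf_shift0: "lattice_from e C = map (shift e) (lattice_from (0,0) C)"
proof -
  have "shift e (0,0) = e" by (simp add: shift_def)
  then show ?thesis using lf_shift[of e "(0,0)" C] by simp
qed

lemma rotab_shift: "rotab R e (shift e v) = shift e (R v)"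
  by (simp add: rotab_def shift_def)

lemma lf_pivot_gen:
  assumes "set ys \<subseteq> {0..<4}"
  shows "lattice_from e (map g1 ys) = map (rotab cw e) (lattice_from e ys)"
    and "lattice_from e (map g3 ys) = map (rotab ccw e) (lattice_from e ys)"
proof -
  have "lattice_from e (map g1 ys) = map (shift e) (lattice_from (cw (0,0)) (map g1 ys))"
    by (simp add: cw_def lf_shift0[of e "map g1 ys"])
  also have "\<dots> = map (shift e) (map cw (lattice_from (0,0) ys))"
    using lf_rot1[OF assms] by simp
  also have "\<dots> = map (rotab cw e) (lattice_from e ys)"
    by (simp add: lf_shift0[of e ys] rotab_shift)
  finally show "lattice_from e (map g1 ys) = map (rotab cw e) (lattice_from e ys)" .
  have "lattice_from e (map g3 ys) = map (shift e) (lattice_from (ccw (0,0)) (map g3 ys))"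
    by (simp add: ccw_def lf_shift0[of e "map g3 ys"])
  also have "\<dots> = map (shift e) (map ccw (lattice_from (0,0) ys))"
    using lf_rot3[OF assms] by simp
  also have "\<dots> = map (rotab ccw e) (lattice_from e ys)"
    by (simp add: lf_shift0[of e ys] rotab_shift)
  finally show "lattice_from e (map g3 ys) = map (rotab ccw e) (lattice_from e ys)" .
qed

lemma nondist:
  assumes "i < m" "m \<le> j" "j < length L" "L ! i = f (L ! j)" "m \<le> length L"
  shows "\<not> distinct (take m L @ map f (drop m L))"
proof
  let ?M = "take m L @ map f (drop m L)"
  assume d: "distinct ?M"
  have "?M ! i = L ! i" using assms by (simp add: nth_append)
  moreover have "?M ! j = f (L ! j)" using assms by (simp add: nth_append)
  moreover have "i < length ?M" "j < length ?M" "i \<noteq> j" using assms by auto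
  ultimately show False using d assms(4) by (simp add: distinct_conv_nth) metis
qed

lemma pivot_lat:
  assumes "1 \<le> k" "k \<le> length C" "set C \<subseteq> {0..<4}"
  defines "L \<equiv> lattice_rep C"
  shows "lattice_rep (pivot (int k) C) = take (k-1) L @ map (rotab cw (L!(k-1))) (drop (k-1) L)"
    and "lattice_rep (pivot (- int k) C) = take (k-1) L @ map (rotab ccw (L!(k-1))) (drop (k-1) L)"
proof -
  define xs where "xs = take (k-1) C"
  define ys where "ys = drop (k-1) C"
  define LA where "LA = lattice_from (0,0) xs"
  define e where "e = last LA"
  have C: "C = xs @ ys" by (simp add: xs_def ys_def)
  have ys4: "set ys \<subseteq> {0..<4}" using assms(3) by (simp add: ys_def) (meson set_drop_subset subset_trans)
  have lenxs: "length xs = k - 1" using assms by (simp add: xs_def)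
  have L: "L = butlast LA @ lattice_from e ys"
    unfolding L_def lattice_rep_def e_def LA_def by (subst C) (rule lf_append)
  have lb: "length (butlast LA) = k - 1" using lenxs by (simp add: LA_def)
  have tk: "take (k-1) L = butlast LA" using L lb by simp
  have dr: "drop (k-1) L = lattice_from e ys" using L lb by simp
  have ek: "L ! (k-1) = e" using L lb by (simp add: nth_append)
  have "lattice_rep (pivot (int k) C) = lattice_from (0,0) (xs @ map g1 ys)"
    by (simp add: lattice_rep_def pivot_pos[OF assms(1)] xs_def ys_def)
  also have "\<dots> = butlast LA @ lattice_from e (map g1 ys)"
    by (simp add: lf_append LA_def e_def)
  also have "\<dots> = take (k-1) L @ map (rotab cw (L!(k-1))) (drop (k-1) L)"
    by (simp only: tk dr ek lf_pivot_gen(1)[OF ys4])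
  finally show "lattice_rep (pivot (int k) C) = take (k-1) L @ map (rotab cw (L!(k-1))) (drop (k-1) L)" .
  have "lattice_rep (pivot (- int k) C) = lattice_from (0,0) (xs @ map g3 ys)"
    by (simp add: lattice_rep_def pivot_neg[OF assms(1)] xs_def ys_def)
  also have "\<dots> = butlast LA @ lattice_from e (map g3 ys)"
    by (simp add: lf_append LA_def e_def)
  also have "\<dots> = take (k-1) L @ map (rotab ccw (L!(k-1))) (drop (k-1) L)"
    by (simp only: tk dr ek lf_pivot_gen(2)[OF ys4])
  finally show "lattice_rep (pivot (- int k) C) = take (k-1) L @ map (rotab ccw (L!(k-1))) (drop (k-1) L)" .
qed

definition wit_ok :: "(int \<times> int) list \<Rightarrow> (int \<times> int \<Rightarrow> int \<times> int) \<Rightarrow> nat \<times> nat \<times> nat \<Rightarrow> bool" where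
  "wit_ok L R w = (case w of (k, i, j) \<Rightarrow>
     i < k - 1 \<and> k - 1 \<le> j \<and> j < length L \<and> L ! i = rotab R (L ! (k-1)) (L ! j))"

lemma wit_nd:
  assumes "1 \<le> k" "k \<le> length C" "set C \<subseteq> {0..<4}"
  shows "wit_ok (lattice_rep C) cw (k,i,j) \<Longrightarrow> \<not> distinct (lattice_rep (pivot (int k) C))"
    and "wit_ok (lattice_rep C) ccw (k,i,j) \<Longrightarrow> \<not> distinct (lattice_rep (pivot (- int k) C))"
proof -
  have len: "k - 1 \<le> length (lattice_rep C)" using assms by (simp add: lattice_rep_def)
  show "\<not> distinct (lattice_rep (pivot (int k) C))" if w: "wit_ok (lattice_rep C) cw (k,i,j)"
  proof -
    from w have h: "i < k-1" "k-1 \<le> j" "j < length (lattice_rep C)"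
      "lattice_rep C ! i = rotab cw (lattice_rep C ! (k-1)) (lattice_rep C ! j)"
      by (auto simp: wit_ok_def)
    show ?thesis unfolding pivot_lat(1)[OF assms] by (rule nondist[where f="rotab cw (lattice_rep C ! (k-1))", OF h len])
  qed
  show "\<not> distinct (lattice_rep (pivot (- int k) C))" if w: "wit_ok (lattice_rep C) ccw (k,i,j)"
  proof -
    from w have h: "i < k-1" "k-1 \<le> j" "j < length (lattice_rep C)"
      "lattice_rep C ! i = rotab ccw (lattice_rep C ! (k-1)) (lattice_rep C ! j)"
      by (auto simp: wit_ok_def)
    show ?thesis unfolding pivot_lat(2)[OF assms] by (rule nondist[where f="rotab ccw (lattice_rep C ! (k-1))", OF h len])
  qed
qed




definition rotm :: "nat \<Rightarrow> nat list \<Rightarrow> nat list" where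
  "rotm m C = map (\<lambda>x. (x + m) mod 4) C"

lemma rotm_rotm: "rotm a (rotm b C) = rotm (a + b) C"
  by (simp add: rotm_def mod_simps ac_simps)

lemma rotm_set: "set (rotm m C) \<subseteq> {0..<4}"
  by (auto simp: rotm_def)

lemma rotm_len[simp]: "length (rotm m C) = length C"
  by (simp add: rotm_def)

lemma rotm_0: "set C \<subseteq> {0..<4} \<Longrightarrow> rotm 0 C = C"
  by (auto simp: rotm_def intro!: map_idI)

lemma rotm_4: "set C \<subseteq> {0..<4} \<Longrightarrow> rotm 4 C = C"
  by (auto simp: rotm_def intro!: map_idI)

lemma pivot_one: "pivot 1 C = rotm 1 C"
  using pivot_pos[of 1 C] by (simp add: rotm_def g1_def)

lemma pivot_mone: "pivot (-1) C = rotm 3 C"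
  using pivot_neg[of 1 C] by (simp add: rotm_def g3_def)

lemma pivot_rotm: "pivot k (rotm m C) = rotm m (pivot k C)"
proof (rule nth_equalityI)
  fix i assume "i < length (pivot k (rotm m C))"
  then have i: "i < length C" by simp
  show "pivot k (rotm m C) ! i = rotm m (pivot k C) ! i"
    using i by (simp add: pivot_nth rotm_def g1_def g3_def mod_simps ac_simps)
qed simp

lemma lat_rotm1: "set C \<subseteq> {0..<4} \<Longrightarrow> lattice_rep (rotm 1 C) = map cw (lattice_rep C)"
proof -
  assume a: "set C \<subseteq> {0..<4}"
  have "rotm 1 C = map g1 C" by (simp add: rotm_def g1_def)
  moreover have "cw (0,0) = (0,0)" by (simp add: cw_def)
  ultimately show ?thesis using lf_rot1[OF a, of "(0,0)"] by (simp add: lattice_rep_def)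
qed

lemma inj_cw: "inj cw"
  by (rule injI) (auto simp: cw_def prod_eq_iff)

lemma dist_rotm: "set C \<subseteq> {0..<4} \<Longrightarrow> distinct (lattice_rep (rotm m C)) = distinct (lattice_rep C)"
proof (induction m)
  case 0 then show ?case by (simp add: rotm_0)
next
  case (Suc m)
  have "rotm (Suc m) C = rotm 1 (rotm m C)" by (simp add: rotm_rotm)
  then have "lattice_rep (rotm (Suc m) C) = map cw (lattice_rep (rotm m C))"
    using lat_rotm1[OF rotm_set] by simp
  then show ?case using Suc distinct_map inj_cw by (metis inj_on_subset subset_UNIV)
qed

lemma conf_pivot: "set C \<subseteq> {0..<4} \<Longrightarrow> set (pivot k C) \<subseteq> {0..<4}"
proof
  fix x assume a: "set C \<subseteq> {0..<4}" and "x \<in> set (pivot k C)"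
  then obtain i where i: "i < length C" "x = pivot k C ! i" by (auto simp: in_set_conv_nth)
  have "C ! i < 4" using a i nth_mem by fastforce
  then show "x \<in> {0..<4}" using i by (simp add: pivot_nth g1_def g3_def)
qed

section \<open>Unreachability from a frozen walk\<close>

lemma apply_take_Suc:
  "j < length ks \<Longrightarrow> apply_pivots (take (Suc j) ks) z = pivot (ks ! j) (apply_pivots (take j ks) z)"
  by (simp add: apply_pivots_def take_Suc_conv_app_nth)

lemma zero_saw: "replicate N 0 \<in> SAW1 N"
proof -
  have "\<forall>q \<in> set (lattice_from p (replicate n 0)). fst p \<le> fst q" for p n
    by (induction n arbitrary: p) (fastforce simp: dstep.simps)+
  then have "distinct (lattice_from p (replicate n 0))" for p n
  proof (induction n arbitrary: p)
    case 0 then show ?case by simp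
  next
    case (Suc n)
    have "p \<notin> set (lattice_from (fst p + 1, snd p) (replicate n 0))"
      using Suc.prems[rule_format, where p="(fst p + 1, snd p)" and n=n] by fastforce
    then show ?case using Suc by (simp add: dstep.simps)
  qed
  moreover have "set (replicate N (0::nat)) \<subseteq> {0..<4}" by (cases N) auto
  ultimately show ?thesis by (simp add: SAW1_def conformations_def lattice_rep_def)
qed

lemma unreach:
  fixes c :: "nat list" and N :: nat
  assumes c4: "set c \<subseteq> {0..<4}"
    and frozen: "\<And>k. 2 \<le> \<bar>k\<bar> \<Longrightarrow> \<bar>k\<bar> \<le> int N \<Longrightarrow> \<not> distinct (lattice_rep (pivot k c))"
    and notz: "\<And>m. rotm m c \<noteq> replicate N 0"
  shows "c \<notin> SAW3 N"
proof
  define S where "S = {D. \<exists>m. D = rotm m c}"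
  have closed: "pivot k D \<in> S" if D: "D \<in> S" and k: "\<bar>k\<bar> \<le> int N" and sw: "pivot k D \<in> SAW1 N" for k D
  proof -
    obtain m where m: "D = rotm m c" using D by (auto simp: S_def)
    consider "k = 0" | "k = 1" | "k = -1" | "2 \<le> \<bar>k\<bar>" by linarith
    then show ?thesis
    proof cases
      case 1 then show ?thesis using D by (simp add: pivot_def)
    next
      case 2 then show ?thesis using m by (auto simp: S_def pivot_one rotm_rotm)
    next
      case 3 then show ?thesis using m by (auto simp: S_def pivot_mone rotm_rotm)
    next
      case 4
      have "distinct (lattice_rep (pivot k D))" using sw by (simp add: SAW1_def)
      then have "distinct (lattice_rep (pivot k c))"
        using m pivot_rotm dist_rotm[OF conf_pivot[OF c4]] by metis
      then show ?thesis using frozen[OF 4 k] by simp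
    qed
  qed
  assume "c \<in> SAW3 N"
  then obtain ks where kb: "\<forall>k \<in> set ks. \<bar>k\<bar> \<le> int N"
      and cdef: "c = apply_pivots ks (replicate N 0)"
      and inter: "\<forall>j. 1 \<le> j \<and> j \<le> length ks \<longrightarrow> apply_pivots (take j ks) (replicate N 0) \<in> SAW1 N"
    by (auto simp: SAW3_def)
  define s where "s j = apply_pivots (take j ks) (replicate N 0)" for j
  have sS: "s j \<in> SAW1 N" if "j \<le> length ks" for j
  proof (cases "j = 0")
    case True then show ?thesis using zero_saw by (simp add: s_def apply_pivots_def)
  next
    case False then show ?thesis using inter that by (simp add: s_def)
  qed
  have step: "s j \<in> S" if j: "j < length ks" and nxt: "s (Suc j) \<in> S" for j
  proof -
    have e: "s (Suc j) = pivot (ks ! j) (s j)" using j by (simp add: s_def apply_take_Suc)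
    have "set (s j) \<subseteq> {0..<4}" using sS[of j] j by (simp add: SAW1_def conformations_def)
    then have "s j = pivot (- (ks ! j)) (s (Suc j))" using e pivot_inv by simp
    moreover have "\<bar>- (ks ! j)\<bar> \<le> int N" using kb j by simp
    ultimately show ?thesis using closed[OF nxt] sS[of j] j by simp
  qed
  have "s (length ks) = rotm 0 c" using cdef rotm_0[OF c4] by (simp add: s_def)
  then have top: "s (length ks) \<in> S" unfolding S_def by blast
  have "\<forall>j. j + d = length ks \<longrightarrow> s j \<in> S" for d
  proof (induction d)
    case 0 then show ?case using top by simp
  next
    case (Suc d)
    show ?case
    proof (intro allI impI)
      fix j assume "j + Suc d = length ks"
      then have "j < length ks" "Suc j + d = length ks" by simp_all
      then show "s j \<in> S" using Suc step by blast
    qed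
  qed
  then have "s 0 \<in> S" by simp
  then obtain m where "replicate N 0 = rotm m c" by (auto simp: s_def S_def apply_pivots_def)
  with notz[of m] show False by simp
qed

section \<open>Reachability without constraints\<close>

lemma pivot_cons: "1 \<le> k \<Longrightarrow> pivot (k + 1) (y # D) = y # pivot k D"
proof -
  assume k: "1 \<le> k"
  obtain n where n0: "k = int n" using k by (metis nonneg_int_cases zero_le_one order_trans)
  have n: "k = int n" "1 \<le> n" using n0 k by simp_all
  have "pivot (int (Suc n)) (y # D) = take n (y # D) @ map g1 (drop n (y # D))"
    using pivot_pos[of "Suc n" "y # D"] by simp
  also have "\<dots> = y # (take (n - 1) D @ map g1 (drop (n - 1) D))"
    using n by (cases n) auto
  also have "\<dots> = y # pivot (int n) D" using pivot_pos[of n D] n by simp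
  finally show ?thesis using n by (simp add: add.commute)
qed

lemma apply_cons: "\<forall>k \<in> set ks. 1 \<le> k \<Longrightarrow>
   apply_pivots (map (\<lambda>k. k + 1) ks) (y # D) = y # apply_pivots ks D"
proof (induction ks arbitrary: D rule: rev_induct)
  case Nil then show ?case by (simp add: apply_pivots_def)
next
  case (snoc x xs)
  then show ?case by (simp add: apply_pivots_def pivot_cons)
qed

lemma apply_rep1: "set D \<subseteq> {0..<4} \<Longrightarrow> apply_pivots (replicate x 1) D = rotm x D"
proof (induction x)
  case 0 then show ?case by (simp add: apply_pivots_def rotm_0)
next
  case (Suc x)
  have r: "replicate (Suc x) (1::int) = replicate x 1 @ [1]" by (simp add: replicate_append_same)
  have "apply_pivots (replicate (Suc x) 1) D = pivot 1 (apply_pivots (replicate x 1) D)"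
    unfolding apply_pivots_def by (simp only: r foldl_append) simp
  then show ?case using Suc by (simp add: pivot_one rotm_rotm)
qed



lemma reach_n: "\<forall>C. length C = n \<longrightarrow> set C \<subseteq> {0..<4} \<longrightarrow>
   (\<exists>ks. (\<forall>k\<in>set ks. 1 \<le> k \<and> k \<le> int n) \<and> C = apply_pivots ks (replicate n 0))"
proof (induction n)
  case 0 then show ?case by (auto simp: apply_pivots_def intro!: exI[of _ "[]"])
next
  case (Suc n)
  show ?case
  proof (intro allI impI)
    fix C :: "nat list" assume len: "length C = Suc n" and C4: "set C \<subseteq> {0..<4}"
    then obtain x C' where C: "C = x # C'" by (cases C) auto
    have x: "x < 4" and C'4: "set C' \<subseteq> {0..<4}" using C4 C by auto
    have "length (rotm (4 - x) C') = n" using len C by simp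
    then obtain ks where ks: "\<forall>k\<in>set ks. 1 \<le> k \<and> k \<le> int n"
      and ke: "rotm (4 - x) C' = apply_pivots ks (replicate n 0)"
      using Suc rotm_set by blast
    define ks' where "ks' = map (\<lambda>k. k + 1) ks @ replicate x 1"
    have "apply_pivots ks' (replicate (Suc n) 0)
        = apply_pivots (replicate x 1) (apply_pivots (map (\<lambda>k. k + 1) ks) (0 # replicate n 0))"
      by (simp add: ks'_def apply_pivots_def)
    also have "\<dots> = apply_pivots (replicate x 1) (0 # rotm (4 - x) C')"
      using apply_cons ks ke by simp
    also have "\<dots> = rotm x (0 # rotm (4 - x) C')"
      by (rule apply_rep1) (use rotm_set in auto)
    also have "\<dots> = (x mod 4) # rotm x (rotm (4 - x) C')"
      unfolding rotm_def[of x] by simp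
    also have "\<dots> = x # rotm (x + (4 - x)) C'"
      using x by (simp add: rotm_rotm)
    also have "x + (4 - x) = 4" using x by simp
    also have "x # rotm 4 C' = C" using rotm_4[OF C'4] C by simp
    finally have "C = apply_pivots ks' (replicate (Suc n) 0)" by simp
    moreover have "\<forall>k\<in>set ks'. 1 \<le> k \<and> k \<le> int (Suc n)"
      using ks by (auto simp: ks'_def)
    ultimately show "\<exists>ks. (\<forall>k\<in>set ks. 1 \<le> k \<and> k \<le> int (Suc n)) \<and> C = apply_pivots ks (replicate (Suc n) 0)"
      by blast
  qed
qed

lemma saw1_saw2: "C \<in> SAW1 N \<Longrightarrow> C \<in> SAW2 N"
proof -
  assume a: "C \<in> SAW1 N"
  then have "length C = N" "set C \<subseteq> {0..<4}" by (auto simp: SAW1_def conformations_def)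
  then obtain ks where kb: "\<forall>k\<in>set ks. 1 \<le> k \<and> k \<le> int N" and ce: "C = apply_pivots ks (replicate N 0)"
    using reach_n by blast
  show ?thesis unfolding SAW2_def using a kb ce by (auto intro!: exI[of _ ks])
qed

fun chk :: "(int \<times> int) list \<Rightarrow> (int \<times> int \<Rightarrow> int \<times> int) \<Rightarrow> nat \<Rightarrow> (nat \<times> nat) list \<Rightarrow> bool" where
  "chk L R n [] = True"
| "chk L R n (w # ws) = (wit_ok L R (n, w) \<and> chk L R (Suc n) ws)"

lemma chk_nth: "chk L R n ws \<Longrightarrow> t < length ws \<Longrightarrow> wit_ok L R (n + t, ws ! t)"
proof (induction ws arbitrary: n t)
  case Nil then show ?case by simp
next
  case (Cons w ws)
  show ?case
  proof (cases t)
    case 0 then show ?thesis using Cons.prems by simp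
  next
    case (Suc t') then show ?thesis using Cons.IH[of "Suc n" t'] Cons.prems by simp
  qed
qed

definition cc :: "nat list" where "cc = [0, 3, 2, 2, 2, 1, 1, 1, 0, 0, 0, 0, 0, 3, 3, 3, 3, 3, 2, 2, 2, 2, 2, 2, 2, 1, 1, 1, 1, 1, 1, 1, 0, 0, 0, 0, 0, 0, 0, 0, 0, 0, 0, 3, 3, 2, 1, 2, 3, 3, 3, 3, 3, 3, 3, 3, 2, 2, 2, 2, 2, 3, 2, 2, 2, 2, 1, 2, 2, 1, 1, 1, 1, 1, 2, 2, 1, 1, 1, 0, 0, 1, 1, 1, 0, 0, 0, 0, 1, 0, 0, 0, 0, 0, 1, 1, 2, 2, 2, 2, 3, 2, 2, 3, 2, 2, 2, 2, 3, 3, 3, 2, 2, 3, 3, 3, 3, 3, 0, 0, 3, 3, 3, 3, 3, 0, 0, 3, 0, 0, 0, 0, 0, 0, 0, 0, 1, 0, 0, 0, 1, 1, 1, 1, 1, 1, 1, 0, 3, 3, 0, 1, 1, 1, 1, 1, 1, 2, 2, 2, 2, 2, 2, 2, 2, 1, 2, 3, 2, 2, 2, 2, 3, 3, 3, 2, 2, 3, 0, 0, 3, 3, 3, 3, 3, 0, 0, 3, 0, 1, 0, 0, 0, 0, 0, 0, 1, 1, 1, 1, 1, 1, 1, 2, 2, 2, 2, 2, 2, 2, 3, 3, 3, 3, 3, 0, 0, 0, 0, 0, 1, 1, 1, 2, 2, 2, 3]"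

definition Lc :: "(int \<times> int) list" where "Lc = [(0, 0), (1, 0), (1, 1), (0, 1), ((-1), 1), ((-2), 1), ((-2), 0), ((-2), (-1)), ((-2), (-2)), ((-1), (-2)), (0, (-2)), (1, (-2)), (2, (-2)), (3, (-2)), (3, (-1)), (3, 0), (3, 1), (3, 2), (3, 3), (2, 3), (1, 3), (0, 3), ((-1), 3), ((-2), 3), ((-3), 3), ((-4), 3), ((-4), 2), ((-4), 1), ((-4), 0), ((-4), (-1)), ((-4), (-2)), ((-4), (-3)), ((-4), (-4)), ((-3), (-4)), ((-2), (-4)), ((-1), (-4)), (0, (-4)), (1, (-4)), (2, (-4)), (3, (-4)), (4, (-4)), (5, (-4)), (6, (-4)), (7, (-4)), (7, (-3)), (7, (-2)), (6, (-2)), (6, (-3)), (5, (-3)), (5, (-2)), (5, (-1)), (5, 0), (5, 1), (5, 2), (5, 3), (5, 4), (5, 5), (4, 5), (3, 5), (2, 5), (1, 5), (0, 5), (0, 6), ((-1), 6), ((-2), 6), ((-3), 6), ((-4), 6), ((-4), 5), ((-5), 5), ((-6), 5), ((-6), 4), ((-6), 3), ((-6), 2), ((-6), 1), ((-6), 0), ((-7), 0), ((-8), 0), ((-8), (-1)), ((-8), (-2)), ((-8), (-3)), ((-7), (-3)), ((-6), (-3)), ((-6), (-4)), ((-6), (-5)), ((-6), (-6)), ((-5), (-6)), ((-4), (-6)), ((-3), (-6)), ((-2), (-6)), ((-2), (-7)), ((-1), (-7)), (0, (-7)), (1, (-7)), (2, (-7)), (3, (-7)), (3, (-8)), (3, (-9)),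 (2, (-9)), (1, (-9)), (0, (-9)), ((-1), (-9)), ((-1), (-8)), ((-2), (-8)), ((-3), (-8)), ((-3), (-7)), ((-4), (-7)), ((-5), (-7)), ((-6), (-7)), ((-7), (-7)), ((-7), (-6)), ((-7), (-5)), ((-7), (-4)), ((-8), (-4)), ((-9), (-4)), ((-9), (-3)), ((-9), (-2)), ((-9), (-1)), ((-9), 0), ((-9), 1), ((-8), 1), ((-7), 1), ((-7), 2), ((-7), 3), ((-7), 4), ((-7), 5), ((-7), 6), ((-6), 6), ((-5), 6), ((-5), 7), ((-4), 7), ((-3), 7), ((-2), 7), ((-1), 7), (0, 7), (1, 7), (2, 7), (3, 7), (3, 6), (4, 6), (5, 6), (6, 6), (6, 5), (6, 4), (6, 3), (6, 2), (6, 1), (6, 0), (6, (-1)), (7, (-1)), (7, 0), (7, 1), (8, 1), (8, 0), (8, (-1)), (8, (-2)), (8, (-3)), (8, (-4)), (8, (-5)), (7, (-5)), (6, (-5)), (5, (-5)), (4, (-5)), (3, (-5)), (2, (-5)), (1, (-5)), (0, (-5)), (0, (-6)), ((-1), (-6)), ((-1), (-5)), ((-2), (-5)), ((-3), (-5)), ((-4), (-5)), ((-5), (-5)), ((-5), (-4)), ((-5), (-3)), ((-5), (-2)), ((-6), (-2)), ((-7), (-2)), ((-7), (-1)), ((-6), (-1)), ((-5), (-1)), ((-5), 0), ((-5), 1), ((-5), 2), ((-5), 3), ((-5), 4), ((-4), 4), ((-3), 4), ((-3), 5), ((-2), 5), ((-2), 4), ((-1), 4), (0, 4), (1, 4), (2,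 4), (3, 4), (4, 4), (4, 3), (4, 2), (4, 1), (4, 0), (4, (-1)), (4, (-2)), (4, (-3)), (3, (-3)), (2, (-3)), (1, (-3)), (0, (-3)), ((-1), (-3)), ((-2), (-3)), ((-3), (-3)), ((-3), (-2)), ((-3), (-1)), ((-3), 0), ((-3), 1), ((-3), 2), ((-2), 2), ((-1), 2), (0, 2), (1, 2), (2, 2), (2, 1), (2, 0), (2, (-1)), (1, (-1)), (0, (-1)), ((-1), (-1)), ((-1), 0)]"

definition W1 :: "(nat \<times> nat) list" where "W1 = [(0, 224), (1, 221), (2, 218), (1, 21), (0, 22), (1, 23), (2, 26), (1, 27), (2, 28), (5, 33), (4, 34), (3, 35), (2, 36), (3, 37), (4, 38), (5, 39), (8, 44), (7, 45), (6, 50), (7, 51), (8, 52), (11, 57), (10, 58), (9, 59), (8, 60), (9, 61), (11, 63), (12, 64), (13, 65), (13, 67), (14, 70), (13, 71), (14, 72), (15, 73), (16, 74), (20, 80), (19, 81), (21, 85), (20, 86), (19, 87), (18, 88), (18, 90), (15, 95), (18, 92), (19, 93), (20, 92), (46, 48), (47, 49), (46, 50), (22, 92), (23, 93), (24, 94), (52, 144), (53, 143), (54, 142), (55, 141), (56, 138), (56, 136), (57, 135), (58, 134), (60, 62), (60, 134), (62, 132), (63, 131), (64, 130), (65, 129), (66, 68), (66, 126), (68, 126), (69, 123), (70, 122), (71, 121), (70, 118), (73, 75), (72, 118), (75, 119), (76, 116), (77, 115), (78, 114), (79, 111), (80, 82), (79, 109), (82, 110), (83, 109), (84, 106), (85,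 105), (85, 103), (87, 89), (87, 103), (89, 101), (89, 99), (90, 98), (91, 97), (93, 95), (93, 97), (95, 97), (93, 99), (92, 100), (92, 102), (99, 101), (90, 102), (89, 103), (102, 104), (87, 105), (86, 106), (85, 107), (84, 108), (107, 109), (84, 110), (83, 111), (80, 112), (79, 113), (112, 114), (79, 115), (78, 116), (77, 117), (76, 118), (117, 119), (76, 120), (73, 121), (72, 122), (71, 123), (70, 124), (69, 125), (124, 126), (69, 127), (66, 128), (127, 129), (66, 130), (65, 131), (64, 132), (63, 133), (62, 134), (60, 136), (60, 138), (135, 137), (58, 138), (57, 139), (56, 140), (139, 141), (56, 142), (55, 143), (54, 144), (53, 145), (52, 146), (51, 147), (46, 148), (45, 153), (148, 152), (149, 151), (150, 152), (149, 153), (148, 154), (45, 155), (44, 156), (43, 157), (156, 158), (43, 159), (42, 160), (41, 161), (40, 162), (39, 163), (38, 164), (37, 165), (35, 167), (165, 167), (166, 168), (35, 169), (34, 170), (33, 171), (32, 172), (171, 173), (32, 174), (31, 175), (28, 178), (175, 179), (176, 178), (177, 179), (176, 180), (29, 181), (28, 182), (27, 183), (26, 184), (25, 185), (184, 186), (25, 187), (23, 189), (187, 189), (188, 190), (23, 191), (22, 192), (21, 193), (20, 194), (19, 195), (18, 196), (195, 197), (18, 198), (17, 199), (16, 200), (15, 201), (14, 202), (13, 203), (202, 204), (13, 205), (12, 206), (11, 207), (10, 208), (9, 209), (8, 210), (209, 211), (8, 212), (7, 213), (6, 214), (5, 215), (214, 216), (5, 217), (4, 218), (3, 219), (2, 220),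 (219, 221), (2, 222), (1, 223), (222, 224), (1, 225), (0, 226), (225, 227)]"

definition W3 :: "(nat \<times> nat) list" where "W3 = [(0, 2), (1, 3), (0, 4), (0, 6), (4, 6), (0, 8), (4, 10), (7, 9), (4, 12), (0, 12), (1, 13), (7, 17), (12, 14), (9, 19), (1, 17), (2, 18), (12, 22), (17, 19), (12, 24), (2, 22), (3, 23), (4, 24), (5, 25), (17, 31), (24, 26), (19, 33), (5, 29), (6, 30), (7, 31), (8, 32), (24, 38), (31, 33), (24, 40), (8, 36), (9, 37), (10, 38), (11, 39), (12, 40), (13, 41), (14, 44), (13, 45), (40, 46), (42, 44), (42, 46), (44, 46), (45, 47), (42, 48), (33, 57), (13, 51), (14, 52), (15, 53), (16, 54), (17, 55), (18, 56), (14, 62), (55, 57), (16, 62), (18, 60), (19, 61), (21, 63), (22, 64), (61, 63), (22, 66), (22, 68), (23, 69), (65, 67), (25, 69), (21, 75), (68, 70), (23, 75), (25, 73), (26, 74), (29, 77), (30, 78), (29, 79), (75, 77), (74, 80), (75, 81), (78, 80), (30, 84), (31, 83), (32, 84), (29, 89), (83, 85), (31, 89), (32, 88), (34, 90), (35, 91), (88, 90), (35, 93), (36, 94), (78, 144), (79, 143), (82, 144), (83, 145), (84, 146), (83, 147), (80, 148), (79, 147), (76, 154), (100, 102), (72, 156), (71, 157), (103, 105), (69, 157), (75, 163), (76, 164), (76, 166), (75, 167), (72, 166), (110, 112), (70, 166), (76, 172), (69, 167), (69, 169), (68, 170), (66, 170), (65, 171), (64, 170), (119, 121), (62, 170), (60,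 172), (62, 174), (62, 176), (62, 178), (59, 177), (126, 128), (57, 177), (56, 176), (54, 178), (55, 181), (54, 182), (53, 183), (52, 184), (51, 185), (52, 188), (136, 138), (44, 184), (43, 185), (44, 188), (43, 187), (41, 189), (41, 191), (94, 188), (144, 150), (145, 149), (146, 148), (147, 149), (146, 150), (96, 188), (41, 195), (40, 196), (96, 192), (97, 193), (98, 194), (99, 195), (100, 196), (102, 196), (103, 195), (105, 195), (106, 194), (94, 164), (93, 165), (93, 167), (164, 166), (91, 167), (88, 168), (167, 169), (88, 170), (87, 171), (86, 172), (83, 173), (82, 174), (81, 175), (174, 176), (81, 177), (78, 178), (75, 179), (74, 180), (179, 181), (74, 182), (73, 183), (72, 184), (71, 185), (68, 186), (67, 187), (186, 188), (65, 189), (63, 191), (189, 191), (63, 193), (61, 193), (60, 194), (59, 195), (58, 196), (55, 197), (54, 198), (53, 199), (52, 200), (51, 201), (50, 202), (49, 203), (40, 204), (39, 205), (38, 206), (37, 207), (36, 208), (35, 209), (34, 210), (31, 211), (30, 212), (29, 213), (28, 214), (27, 215), (24, 216), (23, 217), (22, 218), (21, 219), (20, 220), (17, 221), (16, 222), (15, 223), (12, 224), (11, 225), (10, 226), (7, 227)]"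

lemma cc_len: "length cc = 227" by (simp add: cc_def)
lemma cc_set: "set cc \<subseteq> {0..<4}" by (simp add: cc_def)
lemma cc_L: "lattice_rep cc = Lc" by (simp add: cc_def Lc_def lattice_rep_def dstep.simps)
lemma Lc_dist: "distinct Lc" by (simp add: Lc_def)
lemma W1_len: "length W1 = 226" by (simp add: W1_def)
lemma W3_len: "length W3 = 226" by (simp add: W3_def)
lemma W1_chk: "chk Lc cw 2 W1" by (simp add: W1_def Lc_def wit_ok_def rotab_def shift_def cw_def)
lemma W3_chk: "chk Lc ccw 2 W3" by (simp add: W3_def Lc_def wit_ok_def rotab_def shift_def ccw_def)




lemma cc_frozen:
  assumes k2: "2 \<le> \<bar>k\<bar>" and kN: "\<bar>k\<bar> \<le> int 227"
  shows "\<not> distinct (lattice_rep (pivot k cc))"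
proof -
  obtain n where n: "k = int n \<or> k = - int n" by (metis int_cases2)
  have n2: "2 \<le> n" "n \<le> 227" using n k2 kN by auto
  define t where "t = n - 2"
  have t: "t < 226" "2 + t = n" using n2 by (auto simp: t_def)
  have lc: "1 \<le> n" "n \<le> length cc" using n2 by (auto simp: cc_len)
  show ?thesis
  proof (cases "k = int n")
    case True
    obtain i j where ij: "W1 ! t = (i, j)" by fastforce
    have "wit_ok Lc cw (n, i, j)" using chk_nth[OF W1_chk, of t] t ij by (simp add: W1_len)
    then show ?thesis using wit_nd(1)[OF lc cc_set] True by (simp add: cc_L)
  next
    case False
    then have kk: "k = - int n" using n by simp
    obtain i j where ij: "W3 ! t = (i, j)" by fastforce
    have "wit_ok Lc ccw (n, i, j)" using chk_nth[OF W3_chk, of t] t ij by (simp add: W3_len)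
    then show ?thesis using wit_nd(2)[OF lc cc_set] kk by (simp add: cc_L)
  qed
qed

lemma cc_notz: "rotm m cc \<noteq> replicate 227 0"
proof
  assume a: "rotm m cc = replicate 227 0"
  have "cc ! 0 = 0" "cc ! 1 = 3" by (simp_all add: cc_def)
  moreover have "rotm m cc ! 0 = 0" "rotm m cc ! 1 = 0" using a by simp_all
  ultimately have "m mod 4 = 0" "(3 + m) mod 4 = 0" using cc_len by (simp_all add: rotm_def)
  then show False by presburger
qed

theorem mainTheorem2:
  shows "\<exists>N::nat. N \<ge> 1 \<and> SAW2 N \<noteq> SAW3 N"
proof -
  have s1: "cc \<in> SAW1 227"
    using cc_len cc_set Lc_dist cc_L by (simp add: SAW1_def conformations_def)
  have "cc \<in> SAW2 227" using saw1_saw2[OF s1] .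
  moreover have "cc \<notin> SAW3 227"
    by (rule unreach[OF cc_set cc_frozen cc_notz]) simp_all
  ultimately show ?thesis by (intro exI[of _ 227]) auto
qed


end
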